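(* Let $H$ be a complex Hilbert space, $E$ a finite-dimensional subspace of $H$ and $F$ a subspace of $E$. Then for any unitary operator $u$ on $H$ which fixes each element of $E^{\perp}$, there exists a unique unitary operator $\pi_{E,F}(u)$ on $H$ such that: (i) $\pi_{E,F}(u)$ fixes each element of $F^{\perp}$; (ii) the image of $H$ by $u - \pi_{E,F}(u)$ is included in the image of $F^{\perp}$ by $u - \mathrm{Id}$. Moreover, if $G$ is a subspace of $F$, then $\pi_{F,G}(\pi_{E,F}(u))$ is well-defined and equals $\pi_{E,G}(u)$. *)

theory Defs
  imports Complex_Main
begin

text \<open>HOL-Analysis has no complex inner product spaces, so we introduce them here.
  Convention: the inner product is conjugate-linear in the first argument.\<close>

class complex_vector = ab_group_add +
  fixes scaleC :: "complex \<Rightarrow> 'a \<Rightarrow> 'a"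
  assumes scaleC_add_right: "scaleC a (x + y) = scaleC a x + scaleC a y"
    and scaleC_add_left: "scaleC (a + b) x = scaleC a x + scaleC b x"
    and scaleC_scaleC: "scaleC a (scaleC b x) = scaleC (a * b) x"
    and scaleC_one: "scaleC 1 x = x"

class complex_inner = complex_vector +
  fixes cinner :: "'a \<Rightarrow> 'a \<Rightarrow> complex"
  assumes cinner_commute: "cinner x y = cnj (cinner y x)"
    and cinner_add_left: "cinner (x + y) z = cinner x z + cinner y z"
    and cinner_scaleC_left: "cinner (scaleC r x) y = cnj r * cinner x y"
    and cinner_ge_zero: "0 \<le> Re (cinner x x)"
    and cinner_eq_zero_iff: "cinner x x = 0 \<longleftrightarrow> x = 0"

definition cnorm :: "'a::complex_inner \<Rightarrow> real" where
  "cnorm x = sqrt (Re (cinner x x))"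

class chilbert_space = complex_inner +
  assumes complete_cnorm:
    "\<And>X :: nat \<Rightarrow> 'a.
     (\<forall>e>0. \<exists>N::nat. \<forall>m\<ge>N. \<forall>n\<ge>N. sqrt (Re (cinner (X m - X n) (X m - X n))) < e) \<Longrightarrow>
     (\<exists>L. \<forall>e>0. \<exists>N::nat. \<forall>n\<ge>N. sqrt (Re (cinner (X n - L) (X n - L))) < e)"

definition csubspace :: "'a::complex_vector set \<Rightarrow> bool" where
  "csubspace S \<longleftrightarrow> 0 \<in> S \<and> (\<forall>x\<in>S. \<forall>y\<in>S. x + y \<in> S) \<and> (\<forall>c. \<forall>x\<in>S. scaleC c x \<in> S)"

definition cspan :: "'a::complex_vector set \<Rightarrow> 'a set" where
  "cspan B = {\<Sum>b\<in>T. scaleC (c b) b | T c. finite T \<and> T \<subseteq> B}"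

definition finite_dim_csubspace :: "'a::complex_vector set \<Rightarrow> bool" where
  "finite_dim_csubspace E \<longleftrightarrow> csubspace E \<and> (\<exists>B. finite B \<and> E = cspan B)"

definition orthogonal_complement :: "'a::complex_inner set \<Rightarrow> 'a set" where
  "orthogonal_complement S = {x. \<forall>y\<in>S. cinner y x = 0}"

definition clinear :: "('a::complex_vector \<Rightarrow> 'b::complex_vector) \<Rightarrow> bool" where
  "clinear f \<longleftrightarrow> (\<forall>x y. f (x + y) = f x + f y) \<and> (\<forall>c x. f (scaleC c x) = scaleC c (f x))"

definition unitary :: "('a::complex_inner \<Rightarrow> 'a) \<Rightarrow> bool" where
  "unitary u \<longleftrightarrow> clinear u \<and> bij u \<and> (\<forall>x y. cinner (u x) (u y) = cinner x y)"

text \<open>The defining property of \<pi>_{E,F}(u) (E is implicit: only used via u fixing E^perp).\<close>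
definition is_pi :: "'a::complex_inner set \<Rightarrow> ('a \<Rightarrow> 'a) \<Rightarrow> ('a \<Rightarrow> 'a) \<Rightarrow> bool" where
  "is_pi F u p \<longleftrightarrow> unitary p \<and> (\<forall>x\<in>orthogonal_complement F. p x = x)
     \<and> range (\<lambda>x. u x - p x) \<subseteq> (\<lambda>x. u x - x) ` orthogonal_complement F"

definition pi_op :: "'a::complex_inner set \<Rightarrow> 'a set \<Rightarrow> ('a \<Rightarrow> 'a) \<Rightarrow> ('a \<Rightarrow> 'a)" where
  "pi_op E F u = (THE p. is_pi F u p)"

end

theory Submission imports Defs begin

lemma scaleC_zero_right[simp]: "scaleC a (0::'a::complex_vector) = 0"
proof -
  have "scaleC a (0::'a) + scaleC a 0 = scaleC a 0 + 0"
    by (metis scaleC_add_right add_0_right)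
  thus ?thesis by simp
qed

lemma scaleC_zero_left[simp]: "scaleC 0 (x::'a::complex_vector) = 0"
proof -
  have "scaleC 0 x + scaleC 0 x = scaleC 0 x + 0"
    by (metis scaleC_add_left add_0_right)
  thus ?thesis by simp
qed

lemma scaleC_minus_right: "scaleC a (- x) = - scaleC a (x::'a::complex_vector)"
  by (metis scaleC_add_right scaleC_zero_right add.right_inverse minus_unique)

lemma scaleC_minus_left: "scaleC (- a) x = - scaleC a (x::'a::complex_vector)"
  by (metis scaleC_add_left scaleC_zero_left add.right_inverse minus_unique)

lemma scaleC_diff_right: "scaleC a (x - y) = scaleC a x - scaleC a (y::'a::complex_vector)"
  by (simp only: diff_conv_add_uminus scaleC_add_right scaleC_minus_right)

lemma scaleC_diff_left: "scaleC (a - b) x = scaleC a x - scaleC b (x::'a::complex_vector)"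
  by (simp only: diff_conv_add_uminus scaleC_add_left scaleC_minus_left)

lemma scaleC_sum_right: "scaleC a (sum f A) = (\<Sum>x\<in>A. scaleC a (f x::'a::complex_vector))"
  by (induction A rule: infinite_finite_induct) (auto simp: scaleC_add_right)

lemma cinner_add_right: "cinner x (y + z) = cinner x y + cinner x (z::'a::complex_inner)"
  by (metis cinner_commute cinner_add_left complex_cnj_add)

lemma cinner_scaleC_right: "cinner x (scaleC r y) = r * cinner x (y::'a::complex_inner)"
  by (metis cinner_commute cinner_scaleC_left complex_cnj_mult complex_cnj_cnj)

lemma cinner_zero_left[simp]: "cinner 0 (y::'a::complex_inner) = 0"
  using cinner_scaleC_left[of 0 y y] by simp

lemma cinner_zero_right[simp]: "cinner (y::'a::complex_inner) 0 = 0"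
  using cinner_commute[of y 0] by simp

lemma cinner_minus_left: "cinner (- x) (y::'a::complex_inner) = - cinner x y"
  by (metis cinner_add_left cinner_zero_left add.right_inverse minus_unique)

lemma cinner_minus_right: "cinner y (- x::'a::complex_inner) = - cinner y x"
  by (metis cinner_add_right cinner_zero_right add.right_inverse minus_unique)

lemma cinner_diff_left: "cinner (x - z) (y::'a::complex_inner) = cinner x y - cinner z y"
  by (simp only: diff_conv_add_uminus cinner_add_left cinner_minus_left)

lemma cinner_diff_right: "cinner y (x - z::'a::complex_inner) = cinner y x - cinner y z"
  by (simp only: diff_conv_add_uminus cinner_add_right cinner_minus_right)

lemma cinner_sum_left: "cinner (sum f A) (y::'a::complex_inner) = (\<Sum>x\<in>A. cinner (f x) y)"
  by (induction A rule: infinite_finite_induct) (auto simp: cinner_add_left)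

lemma cinner_sum_right: "cinner y (sum f A::'a::complex_inner) = (\<Sum>x\<in>A. cinner y (f x))"
  by (induction A rule: infinite_finite_induct) (auto simp: cinner_add_right)

lemma cinner_self_real: "cinner x (x::'a::complex_inner) = complex_of_real (Re (cinner x x))"
proof -
  have h: "cinner x x = cnj (cinner x x)" by (rule cinner_commute)
  have "Im (cinner x x) = - Im (cinner x x)" using arg_cong[OF h, of Im] by simp
  hence "Im (cinner x x) = 0" by simp
  thus ?thesis by (simp add: complex_eq_iff)
qed


lemma csubspace_0: "csubspace S \<Longrightarrow> 0 \<in> S" by (simp add: csubspace_def)
lemma csubspace_add: "csubspace S \<Longrightarrow> x \<in> S \<Longrightarrow> y \<in> S \<Longrightarrow> x + y \<in> S" by (simp add: csubspace_def)
lemma csubspace_scale: "csubspace S \<Longrightarrow> x \<in> S \<Longrightarrow> scaleC c x \<in> S" by (simp add: csubspace_def)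
lemma csubspace_minus: "csubspace S \<Longrightarrow> x \<in> S \<Longrightarrow> - x \<in> S"
proof -
  assume "csubspace S" "x \<in> S"
  hence "scaleC (-1) x \<in> S" by (rule csubspace_scale)
  thus ?thesis by (simp only: scaleC_minus_left scaleC_one)
qed
lemma csubspace_diff: "csubspace S \<Longrightarrow> x \<in> S \<Longrightarrow> y \<in> S \<Longrightarrow> x - y \<in> S"
  unfolding diff_conv_add_uminus by (rule csubspace_add) (auto intro: csubspace_minus)
lemma csubspace_sum: "csubspace S \<Longrightarrow> (\<And>x. x \<in> A \<Longrightarrow> f x \<in> S) \<Longrightarrow> sum f A \<in> S"
  by (induction A rule: infinite_finite_induct) (auto simp: csubspace_0 csubspace_add)

lemma cspan_superset: "B \<subseteq> cspan B"
proof
  fix b assume "b \<in> B"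
  have "b = (\<Sum>x\<in>{b}. scaleC ((\<lambda>_. 1) x) x)"
    by (simp add: scaleC_one)
  thus "b \<in> cspan B" unfolding cspan_def
    by (intro CollectI exI[of _ "{b}"] exI[of _ "\<lambda>_. (1::complex)"] conjI) (use \<open>b \<in> B\<close> in auto)
qed

lemma cspan_minimal: "csubspace S \<Longrightarrow> B \<subseteq> S \<Longrightarrow> cspan B \<subseteq> S"
proof
  fix y assume S: "csubspace S" "B \<subseteq> S" and "y \<in> cspan B"
  then obtain T c where y: "y = (\<Sum>b\<in>T. scaleC (c b) b)" "T \<subseteq> B"
    unfolding cspan_def by blast
  show "y \<in> S" unfolding y(1)
    by (rule csubspace_sum[OF S(1)]) (use S y in \<open>auto intro: csubspace_scale\<close>)
qed

lemma cspan_mono: "B \<subseteq> C \<Longrightarrow> cspan B \<subseteq> cspan C"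
  unfolding cspan_def by blast

lemma sum_extend_zero:
  assumes "finite T" "T1 \<subseteq> T"
  shows "(\<Sum>x\<in>T. scaleC (if x \<in> T1 then c x else 0) x) = (\<Sum>x\<in>T1. scaleC (c x) (x::'a::complex_vector))"
proof -
  have "(\<Sum>x\<in>T1. scaleC (if x \<in> T1 then c x else 0) x) = (\<Sum>x\<in>T. scaleC (if x \<in> T1 then c x else 0) x)"
    by (rule sum.mono_neutral_left) (use assms in auto)
  moreover have "(\<Sum>x\<in>T1. scaleC (if x \<in> T1 then c x else 0) x) = (\<Sum>x\<in>T1. scaleC (c x) x)"
    by (rule sum.cong) auto
  ultimately show ?thesis by simp
qed

lemma csubspace_cspan: "csubspace (cspan B)"
  unfolding csubspace_def
proof (intro conjI ballI allI)
  show "0 \<in> cspan B" unfolding cspan_def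
    by (rule CollectI, rule exI[of _ "{}"], auto)
next
  fix x y assume "x \<in> cspan B" "y \<in> cspan B"
  then obtain T1 c1 T2 c2 where x: "x = (\<Sum>b\<in>T1. scaleC (c1 b) b)" "finite T1" "T1 \<subseteq> B"
    and y: "y = (\<Sum>b\<in>T2. scaleC (c2 b) b)" "finite T2" "T2 \<subseteq> B"
    unfolding cspan_def by blast
  let ?T = "T1 \<union> T2"
  let ?c = "\<lambda>b. (if b \<in> T1 then c1 b else 0) + (if b \<in> T2 then c2 b else 0)"
  have "(\<Sum>b\<in>?T. scaleC (?c b) b) = (\<Sum>b\<in>?T. scaleC (if b \<in> T1 then c1 b else 0) b)
       + (\<Sum>b\<in>?T. scaleC (if b \<in> T2 then c2 b else 0) b)"
    by (simp add: scaleC_add_left sum.distrib)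
  also have "\<dots> = x + y" using x y by (simp add: sum_extend_zero)
  finally show "x + y \<in> cspan B" unfolding cspan_def using x y
    by (intro CollectI exI[of _ ?T] exI[of _ ?c]) auto
next
  fix c x assume "x \<in> cspan B"
  then obtain T1 c1 where x: "x = (\<Sum>b\<in>T1. scaleC (c1 b) b)" "finite T1" "T1 \<subseteq> B"
    unfolding cspan_def by blast
  have "scaleC c x = (\<Sum>b\<in>T1. scaleC (c * c1 b) b)"
    using x by (simp add: scaleC_sum_right scaleC_scaleC)
  thus "scaleC c x \<in> cspan B" unfolding cspan_def
    by (intro CollectI exI[of _ T1] exI[of _ "\<lambda>b. c * c1 b"] conjI) (use x(2,3) in auto)
qed

lemma cspan_insertE:
  assumes "y \<in> cspan (insert b B)"
  obtains c t where "t \<in> cspan B" "y = scaleC c b + t"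
proof -
  obtain T c where y: "y = (\<Sum>x\<in>T. scaleC (c x) x)" "finite T" "T \<subseteq> insert b B"
    using assms unfolding cspan_def by blast
  show ?thesis
  proof (cases "b \<in> T")
    case True
    have "y = scaleC (c b) b + (\<Sum>x\<in>T - {b}. scaleC (c x) x)"
      using y True by (simp add: sum.remove)
    moreover have "(\<Sum>x\<in>T - {b}. scaleC (c x) x) \<in> cspan B"
      unfolding cspan_def using y by blast
    ultimately show ?thesis using that by blast
  next
    case False
    hence "y \<in> cspan B" unfolding cspan_def using y by blast
    thus ?thesis using that[of y 0] by simp
  qed
qed

lemma cspan_orth_left:
  assumes "\<forall>b\<in>B. cinner b x = 0" "y \<in> cspan B"
  shows "cinner y x = 0"
proof -
  obtain T c where y: "y = (\<Sum>b\<in>T. scaleC (c b) b)" "finite T" "T \<subseteq> B"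
    using assms unfolding cspan_def by blast
  show ?thesis using assms(1) y by (auto simp: cinner_sum_left cinner_scaleC_left intro!: sum.neutral)
qed

lemma cspan_orth_right:
  assumes "\<forall>b\<in>B. cinner x b = 0" "y \<in> cspan B"
  shows "cinner x y = 0"
  using cspan_orth_left[of B x y] assms by (metis cinner_commute complex_cnj_zero)

lemma cspan_empty: "cspan {} = {0}"
  unfolding cspan_def by auto


definition orthonormal :: "'a::complex_inner set \<Rightarrow> bool" where
  "orthonormal S \<longleftrightarrow> (\<forall>s\<in>S. cinner s s = 1) \<and> (\<forall>s\<in>S. \<forall>t\<in>S. s \<noteq> t \<longrightarrow> cinner s t = 0)"

definition proj :: "'a::complex_inner set \<Rightarrow> 'a \<Rightarrow> 'a" where
  "proj S x = (\<Sum>s\<in>S. scaleC (cinner s x) s)"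

lemma proj_in: "proj S x \<in> cspan S"
  unfolding proj_def
  by (rule csubspace_sum[OF csubspace_cspan]) (use cspan_superset in \<open>auto intro: csubspace_scale[OF csubspace_cspan]\<close>)

lemma proj_orth:
  assumes "finite S" "orthonormal S" "t \<in> S"
  shows "cinner t (x - proj S x) = 0"
proof -
  have "cinner t (proj S x) = (\<Sum>s\<in>S. cinner s x * cinner t s)"
    by (simp add: proj_def cinner_sum_right cinner_scaleC_right)
  also have "\<dots> = cinner t x * cinner t t + (\<Sum>s\<in>S - {t}. cinner s x * cinner t s)"
    using assms by (simp add: sum.remove)
  also have "(\<Sum>s\<in>S - {t}. cinner s x * cinner t s) = 0"
    using assms unfolding orthonormal_def by (intro sum.neutral) auto
  finally show ?thesis using assms unfolding orthonormal_def by (simp add: cinner_diff_right)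
qed

lemma cinner_self_pos:
  assumes "v \<noteq> 0"
  shows "Re (cinner v v) > 0"
proof -
  have "Re (cinner v v) \<noteq> 0"
  proof
    assume "Re (cinner v v) = 0"
    have "cinner v v = complex_of_real (Re (cinner v v))" by (rule cinner_self_real)
    hence "cinner v v = 0" using \<open>Re (cinner v v) = 0\<close> by simp
    hence "v = 0" using cinner_eq_zero_iff by blast
    thus False using assms by contradiction
  qed
  thus ?thesis using cinner_ge_zero[of v] by linarith
qed

lemma normalize_exists:
  assumes "(v::'a::complex_inner) \<noteq> 0"
  obtains n e where "n \<noteq> 0" "v = scaleC n e" "cinner e e = 1" "e = scaleC (inverse n) v"
proof -
  define r where "r = sqrt (Re (cinner v v))"
  have r: "r > 0" using cinner_self_pos[OF assms] unfolding r_def by simp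
  have rr0: "cinner v v = complex_of_real (Re (cinner v v))" by (rule cinner_self_real)
  have "Re (cinner v v) = r * r" unfolding r_def using cinner_ge_zero[of v] by simp
  hence rr: "cinner v v = complex_of_real (r * r)" using rr0 by simp
  define e where "e = scaleC (complex_of_real (inverse r)) v"
  have "cinner e e = complex_of_real (inverse r) * complex_of_real (inverse r) * complex_of_real (r * r)"
    unfolding e_def by (simp add: cinner_scaleC_left cinner_scaleC_right rr)
  also have "\<dots> = complex_of_real (inverse r * inverse r * (r * r))" by (simp only: of_real_mult of_real_inverse)
  also have "inverse r * inverse r * (r * r) = 1" using r by (simp add: field_simps)
  finally have e1: "cinner e e = 1" by simp
  have "scaleC (complex_of_real r) e = v" unfolding e_def using r
    by (simp add: scaleC_scaleC flip: of_real_mult) (simp add: scaleC_one)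
  thus ?thesis using that[of "complex_of_real r" e] e1 r unfolding e_def
    by (simp add: of_real_inverse)
qed

lemma gram_schmidt:
  assumes "finite (B::'a::complex_inner set)"
  shows "\<exists>S. finite S \<and> orthonormal S \<and> S \<subseteq> cspan B \<and> B \<subseteq> cspan S"
  using assms
proof (induction B rule: finite_induct)
  case empty
  show ?case by (rule exI[of _ "{}"]) (auto simp: orthonormal_def)
next
  case (insert b B)
  then obtain S where S: "finite S" "orthonormal S" "S \<subseteq> cspan B" "B \<subseteq> cspan S" by blast
  have sub: "cspan B \<subseteq> cspan (insert b B)" by (rule cspan_mono) auto
  have bin: "b \<in> cspan (insert b B)" using cspan_superset by blast
  have SB: "cspan S \<subseteq> cspan B" by (rule cspan_minimal[OF csubspace_cspan S(3)])
  define v where "v = b - proj S b"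
  show ?case
  proof (cases "v = 0")
    case True
    hence "b = proj S b" unfolding v_def by simp
    hence "b \<in> cspan S" using proj_in by metis
    thus ?thesis using S sub by (intro exI[of _ S]) auto
  next
    case False
    then obtain n e where ne: "n \<noteq> 0" "v = scaleC n e" "cinner e e = 1" "e = scaleC (inverse n) v"
      by (rule normalize_exists)
    have orth: "cinner s e = 0" if "s \<in> S" for s
      using proj_orth[OF S(1,2) that, of b] unfolding ne(4) v_def by (simp add: cinner_scaleC_right)
    have orth2: "cinner e s = 0" if "s \<in> S" for s
      using orth[OF that] by (metis cinner_commute complex_cnj_zero)
    have "e \<notin> S" using orth ne(3) by force
    have on: "orthonormal (insert e S)"
      using S(2) ne(3) orth orth2 unfolding orthonormal_def by auto
    have "v \<in> cspan (insert b B)" unfolding v_def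
      by (rule csubspace_diff[OF csubspace_cspan bin]) (use proj_in SB sub in blast)
    hence ein: "e \<in> cspan (insert b B)" unfolding ne(4) by (rule csubspace_scale[OF csubspace_cspan])
    have sub2: "cspan S \<subseteq> cspan (insert e S)" by (rule cspan_mono) auto
    have "b = scaleC n e + proj S b" using ne(2) unfolding v_def by (simp add: algebra_simps)
    moreover have "scaleC n e \<in> cspan (insert e S)"
      by (rule csubspace_scale[OF csubspace_cspan]) (use cspan_superset in blast)
    moreover have "proj S b \<in> cspan (insert e S)" using proj_in sub2 by blast
    ultimately have "b \<in> cspan (insert e S)" by (metis csubspace_add[OF csubspace_cspan])
    thus ?thesis using S on ein sub sub2 by (intro exI[of _ "insert e S"]) auto
  qed
qed

lemma subspace_finite_span:
  assumes "finite (B::'a::complex_vector set)"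
  shows "csubspace S \<Longrightarrow> S \<subseteq> cspan B \<Longrightarrow> \<exists>T. finite T \<and> T \<subseteq> S \<and> S = cspan T"
  using assms
proof (induction B arbitrary: S rule: finite_induct)
  case empty
  hence "S = {0}" using cspan_empty csubspace_0 by blast
  thus ?case using cspan_empty by (intro exI[of _ "{}"]) auto
next
  case (insert b B)
  define S' where "S' = S \<inter> cspan B"
  have "csubspace S'" unfolding S'_def csubspace_def using insert.prems csubspace_cspan[of B]
    unfolding csubspace_def by auto
  then obtain T' where T': "finite T'" "T' \<subseteq> S'" "S' = cspan T'"
    using insert.IH[of S'] unfolding S'_def by blast
  show ?case
  proof (cases "S \<subseteq> cspan B")
    case True
    hence "S' = S" unfolding S'_def by auto
    thus ?thesis using T' by auto
  next
    case False
    then obtain s where s: "s \<in> S" "s \<notin> cspan B" by auto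
    then obtain c0 t0 where ct0: "t0 \<in> cspan B" "s = scaleC c0 b + t0"
      using insert.prems(2) cspan_insertE by blast
    have c0: "c0 \<noteq> 0" using ct0 s by auto
    have "S \<subseteq> cspan (insert s T')"
    proof
      fix y assume y: "y \<in> S"
      then obtain d t where dt: "t \<in> cspan B" "y = scaleC d b + t"
        using insert.prems(2) cspan_insertE by blast
      have "y - scaleC (d / c0) s = t - scaleC (d / c0) t0"
        using dt ct0 c0 by (simp add: scaleC_add_right scaleC_scaleC algebra_simps)
      moreover have "t - scaleC (d / c0) t0 \<in> cspan B"
        using dt ct0 by (meson csubspace_cspan csubspace_diff csubspace_scale)
      moreover have "y - scaleC (d / c0) s \<in> S"
        using y s insert.prems(1) by (meson csubspace_diff csubspace_scale)
      ultimately have "y - scaleC (d / c0) s \<in> cspan T'" using T' unfolding S'_def by auto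
      hence "y - scaleC (d / c0) s \<in> cspan (insert s T')"
        using cspan_mono[of T' "insert s T'"] by auto
      moreover have "scaleC (d / c0) s \<in> cspan (insert s T')"
        by (rule csubspace_scale[OF csubspace_cspan]) (use cspan_superset in blast)
      ultimately have "(y - scaleC (d / c0) s) + scaleC (d / c0) s \<in> cspan (insert s T')"
        by (rule csubspace_add[OF csubspace_cspan])
      thus "y \<in> cspan (insert s T')" by simp
    qed
    moreover have "cspan (insert s T') \<subseteq> S"
      by (rule cspan_minimal[OF insert.prems(1)]) (use s T' S'_def in auto)
    ultimately show ?thesis using T' s unfolding S'_def by (intro exI[of _ "insert s T'"]) auto
  qed
qed


lemma clinear_0: "clinear f \<Longrightarrow> f 0 = 0"
  unfolding clinear_def by (metis scaleC_zero_left)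
lemma clinear_add: "clinear f \<Longrightarrow> f (x + y) = f x + f y"
  unfolding clinear_def by blast
lemma clinear_scale: "clinear f \<Longrightarrow> f (scaleC c x) = scaleC c (f x)"
  unfolding clinear_def by blast
lemma clinear_minus: "clinear f \<Longrightarrow> f (- x) = - f x"
  by (metis clinear_scale scaleC_minus_left scaleC_one)
lemma clinear_diff: "clinear f \<Longrightarrow> f (x - y) = f x - f y"
proof -
  assume l: "clinear f"
  have "f (x + - y) = f x + f (- y)" by (rule clinear_add[OF l])
  thus ?thesis by (simp only: diff_conv_add_uminus clinear_minus[OF l])
qed

lemma unitary_clinear: "unitary u \<Longrightarrow> clinear u" unfolding unitary_def by blast
lemma unitary_bij: "unitary u \<Longrightarrow> bij u" unfolding unitary_def by blast
lemma unitary_cinner: "unitary u \<Longrightarrow> cinner (u x) (u y) = cinner x y" unfolding unitary_def by blast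

lemma unitary_intro:
  assumes "clinear p" "\<And>x y. cinner (p x) (p y) = cinner x y" "\<And>y. \<exists>x. p x = y"
  shows "unitary p"
proof -
  have "inj p"
  proof (rule injI)
    fix x y assume "p x = p y"
    hence "p (x - y) = 0" using clinear_diff[OF assms(1), of x y] by simp
    hence "cinner (x - y) (x - y) = 0" using assms(2)[of "x - y" "x - y"] by simp
    hence "x - y = 0" using cinner_eq_zero_iff by blast
    thus "x = y" by simp
  qed
  moreover have "surj p" using assms(3) by (metis surj_def)
  ultimately show ?thesis unfolding unitary_def bij_def using assms by blast
qed

lemma csubspace_orth: "csubspace (orthogonal_complement S)"
  unfolding csubspace_def orthogonal_complement_def
  by (auto simp: cinner_add_right cinner_scaleC_right)

lemma orth_anti: "A \<subseteq> B \<Longrightarrow> orthogonal_complement B \<subseteq> orthogonal_complement A"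
  unfolding orthogonal_complement_def by auto

lemma is_pi_self:
  assumes "unitary q" "\<forall>x\<in>orthogonal_complement F. q x = x"
  shows "is_pi F q q"
proof -
  have "0 \<in> orthogonal_complement F" using csubspace_0[OF csubspace_orth] .
  moreover have "q 0 - 0 = 0" using clinear_0[OF unitary_clinear[OF assms(1)]] by simp
  ultimately have "(0::'a) \<in> (\<lambda>x. q x - x) ` orthogonal_complement F" by force
  thus ?thesis unfolding is_pi_def using assms by auto
qed

lemma is_pi_trans:
  assumes "F \<subseteq> F1" "unitary q" "is_pi F1 q p1" "is_pi F p1 p2"
  shows "is_pi F q p2"
proof -
  have lq: "clinear q" using assms(2) by (rule unitary_clinear)
  have sub: "orthogonal_complement F1 \<subseteq> orthogonal_complement F" using assms(1) by (rule orth_anti)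
  have "q x - p2 x \<in> (\<lambda>x. q x - x) ` orthogonal_complement F" for x
  proof -
    obtain a where a: "a \<in> orthogonal_complement F1" "q x - p1 x = q a - a"
      using assms(3) unfolding is_pi_def by blast
    obtain z where z: "z \<in> orthogonal_complement F" "p1 x - p2 x = p1 z - z"
      using assms(4) unfolding is_pi_def by blast
    obtain y where y: "y \<in> orthogonal_complement F1" "q z - p1 z = q y - y"
      using assms(3) unfolding is_pi_def by blast
    have "q x - p2 x = (q x - p1 x) + (p1 x - p2 x)" by simp
    also have "\<dots> = (q a - a) + (p1 z - z)" using a(2) z(2) by simp
    also have "p1 z = q z - (q z - p1 z)" by simp
    also have "q z - p1 z = q y - y" by (rule y(2))
    also have "(q a - a) + (q z - (q y - y) - z) = q (a + z - y) - (a + z - y)"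
      by (simp add: clinear_add[OF lq] clinear_diff[OF lq] algebra_simps)
    finally show ?thesis using a y z sub
      by (metis (no_types, lifting) csubspace_orth csubspace_add csubspace_diff image_eqI subsetD)
  qed
  thus ?thesis using assms(4) unfolding is_pi_def by auto
qed

lemma is_pi_unique:
  assumes "unitary u" "is_pi F u p" "is_pi F u q"
  shows "p = q"
proof
  fix x
  have lu: "clinear u" using assms(1) by (rule unitary_clinear)
  obtain z1 where z1: "z1 \<in> orthogonal_complement F" "u x - p x = u z1 - z1"
    using assms(2) unfolding is_pi_def by blast
  obtain z2 where z2: "z2 \<in> orthogonal_complement F" "u x - q x = u z2 - z2"
    using assms(3) unfolding is_pi_def by blast
  define d where "d = p x - q x"
  define z where "z = z2 - z1"
  have zF: "z \<in> orthogonal_complement F" unfolding z_def using z1 z2 csubspace_orth csubspace_diff by blast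
  have e1: "u z1 = (u x - p x) + z1" by (simp add: z1(2))
  have e2: "u z2 = (u x - q x) + z2" by (simp add: z2(2))
  have dz: "u z = z + d" unfolding z_def d_def clinear_diff[OF lu] e1 e2
    by (simp add: algebra_simps)
  have pz: "p z = z" "q z = z" using zF assms(2,3) unfolding is_pi_def by auto
  have "cinner z d = cinner (p z) (p x) - cinner (q z) (q x)"
    unfolding d_def using pz by (simp add: cinner_diff_right)
  also have "\<dots> = 0" using assms(2,3) unfolding is_pi_def by (simp add: unitary_cinner)
  finally have zd: "cinner z d = 0" .
  hence dz0: "cinner d z = 0" by (metis cinner_commute complex_cnj_zero)
  have "cinner z z = cinner (u z) (u z)" using unitary_cinner[OF assms(1)] by simp
  also have "\<dots> = cinner z z + cinner d d" unfolding dz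
    by (simp add: cinner_add_left cinner_add_right zd dz0)
  finally have "cinner d d = 0" by simp
  hence "d = 0" using cinner_eq_zero_iff by blast
  thus "p x = q x" unfolding d_def by simp
qed


lemma one_step:
  assumes qu: "unitary q" and eF: "e \<in> orthogonal_complement F" and e1: "cinner e e = 1"
    and fx: "\<And>x. x \<in> orthogonal_complement F \<Longrightarrow> cinner e x = 0 \<Longrightarrow> q x = x"
  shows "\<exists>p. is_pi F q p"
proof -
  have lq: "clinear q" using qu by (rule unitary_clinear)
  have cs: "csubspace (orthogonal_complement F)" by (rule csubspace_orth)
  have decomp: "q x = x + scaleC (cinner e x) (q e - e)" if xF: "x \<in> orthogonal_complement F" for x
  proof -
    define x' where "x' = x - scaleC (cinner e x) e"
    have "x' \<in> orthogonal_complement F" unfolding x'_def using xF eF cs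
      by (meson csubspace_diff csubspace_scale)
    moreover have "cinner e x' = 0" unfolding x'_def using e1
      by (simp add: cinner_diff_right cinner_scaleC_right)
    ultimately have "q x' = x'" by (rule fx)
    moreover have "q x = q x' + scaleC (cinner e x) (q e)" unfolding x'_def
      by (simp add: clinear_diff[OF lq] clinear_scale[OF lq])
    ultimately show ?thesis unfolding x'_def by (simp add: scaleC_diff_right)
  qed
  show ?thesis
  proof (cases "q e = e")
    case True
    have "\<forall>x\<in>orthogonal_complement F. q x = x" using decomp True by simp
    thus ?thesis using is_pi_self[OF qu] by blast
  next
    case False
    define a where "a = cinner e (q e)"
    define w where "w = q e - e"
    have ww: "cinner w w = 2 - a - cnj a"
      unfolding w_def a_def using e1 unitary_cinner[OF qu, of e e]
      by (simp add: cinner_diff_left cinner_diff_right) (metis cinner_commute)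
    have a1: "a \<noteq> 1"
    proof
      assume "a = 1"
      hence "cinner w w = 0" using ww by simp
      hence "w = 0" using cinner_eq_zero_iff by blast
      thus False using False unfolding w_def by simp
    qed
    define \<alpha> where "\<alpha> = 1 / (1 - a)"
    have \<alpha>1: "\<alpha> * (1 - a) = 1" unfolding \<alpha>_def using a1 by simp
    have \<alpha>0: "\<alpha> \<noteq> 0" using \<alpha>1 by auto
    have \<alpha>1c: "cnj \<alpha> * (1 - cnj a) = 1" using arg_cong[OF \<alpha>1, of cnj] by simp
    define k where "k x = cinner e (q x - x)" for x
    define p where "p x = q x + scaleC (\<alpha> * k x) w" for x
    have k_add: "k (x + y) = k x + k y" for x y
      unfolding k_def by (simp add: clinear_add[OF lq] cinner_diff_right cinner_add_right)
    have k_scale: "k (scaleC c x) = c * k x" for c x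
      unfolding k_def by (simp add: clinear_scale[OF lq] cinner_diff_right cinner_scaleC_right algebra_simps)
    have lp: "clinear p" unfolding clinear_def p_def
      by (simp add: clinear_add[OF lq] clinear_scale[OF lq] k_add k_scale scaleC_add_left
          scaleC_add_right scaleC_scaleC algebra_simps)
    have pfix: "p x = x" if xF: "x \<in> orthogonal_complement F" for x
    proof -
      have "k x = cinner e x * (a - 1)" unfolding k_def a_def using decomp[OF xF] e1
        by (simp add: cinner_scaleC_right cinner_diff_right algebra_simps)
      hence "\<alpha> * k x = cinner e x * (\<alpha> * (a - 1))" by (simp only: mult_ac)
      moreover have "\<alpha> * (a - 1) = - (\<alpha> * (1 - a))" by (simp add: algebra_simps)
      ultimately have "\<alpha> * k x = - cinner e x" using \<alpha>1 by simp
      thus ?thesis unfolding p_def using decomp[OF xF] unfolding w_def by (simp add: scaleC_minus_left)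
    qed
    have qw: "cinner (q x) w = - cnj (k x)" for x
      unfolding w_def k_def using unitary_cinner[OF qu, of x e]
      by (simp add: cinner_diff_right cinner_diff_left) (metis cinner_commute)
    have wq: "cinner w (q y) = - k y" for y
      unfolding w_def k_def using unitary_cinner[OF qu, of e y]
      by (simp add: cinner_diff_right cinner_diff_left)
    have br: "\<alpha> + cnj \<alpha> = \<alpha> * cnj \<alpha> * (2 - a - cnj a)"
    proof -
      have "\<alpha> * cnj \<alpha> * (2 - a - cnj a) = cnj \<alpha> * (\<alpha> * (1 - a)) + \<alpha> * (cnj \<alpha> * (1 - cnj a))"
        by (simp add: algebra_simps)
      thus ?thesis using \<alpha>1 \<alpha>1c by simp
    qed
    have iso: "cinner (p x) (p y) = cinner x y" for x y
    proof -
      have "cinner (p x) (p y) = cinner (q x) (q y) + \<alpha> * k y * cinner (q x) w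
           + cnj (\<alpha> * k x) * cinner w (q y) + cnj (\<alpha> * k x) * (\<alpha> * k y) * cinner w w"
        unfolding p_def by (simp add: cinner_add_left cinner_add_right cinner_scaleC_left cinner_scaleC_right algebra_simps)
      also have "\<dots> = cinner x y - cnj (k x) * k y * ((\<alpha> + cnj \<alpha>) - \<alpha> * cnj \<alpha> * (2 - a - cnj a))"
        unfolding qw wq ww unitary_cinner[OF qu] by (simp add: algebra_simps)
      also have "\<dots> = cinner x y" using br by simp
      finally show ?thesis .
    qed
    have eF': "p e = e" using pfix[OF eF] .
    define qi where "qi = inv q"
    have qqi: "q (qi y) = y" for y unfolding qi_def using unitary_bij[OF qu] by (simp add: bij_is_surj surj_f_inv_f)
    have pqi: "p (qi y) = y + scaleC (\<alpha> * k (qi y)) w" for y unfolding p_def qqi ..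
    have kqe: "k (qi e) = 1 - cnj a"
    proof -
      have "cinner e (qi e) = cinner (q e) (q (qi e))" using unitary_cinner[OF qu] by simp
      also have "\<dots> = cnj a" unfolding qqi a_def by (metis cinner_commute)
      finally show ?thesis unfolding k_def qqi using e1 by (simp add: cinner_diff_right)
    qed
    have ca: "1 - cnj a \<noteq> 0"
    proof
      assume "1 - cnj a = 0"
      hence "cnj a = 1" by simp
      hence "a = 1" by (metis complex_cnj_cnj complex_cnj_one)
      thus False using a1 by simp
    qed
    have kqe0: "\<alpha> * k (qi e) \<noteq> 0" using kqe \<alpha>0 ca by simp
    have surj: "\<exists>x. p x = y" for y
    proof -
      define c where "c = - (\<alpha> * k (qi y)) / (\<alpha> * k (qi e))"
      define x where "x = qi y - scaleC c (e - qi e)"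
      have "p x = p (qi y) - scaleC c (p e - p (qi e))"
        unfolding x_def by (simp add: clinear_diff[OF lp] clinear_scale[OF lp])
      also have "p e - p (qi e) = - scaleC (\<alpha> * k (qi e)) w" unfolding pqi eF' by simp
      also have "p (qi y) - scaleC c (- scaleC (\<alpha> * k (qi e)) w)
          = y + (scaleC (\<alpha> * k (qi y)) w + scaleC (c * (\<alpha> * k (qi e))) w)"
        unfolding pqi by (simp add: scaleC_minus_right scaleC_scaleC)
      also have "scaleC (\<alpha> * k (qi y)) w + scaleC (c * (\<alpha> * k (qi e))) w
          = scaleC (\<alpha> * k (qi y) + c * (\<alpha> * k (qi e))) w" by (simp only: scaleC_add_left)
      also have "\<alpha> * k (qi y) + c * (\<alpha> * k (qi e)) = 0" unfolding c_def using kqe0 by simp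
      finally show ?thesis by auto
    qed
    have up: "unitary p" by (rule unitary_intro[OF lp iso surj])
    have "q x - p x \<in> (\<lambda>x. q x - x) ` orthogonal_complement F" for x
    proof -
      define c where "c = - (\<alpha> * k x)"
      have "q x - p x = q (scaleC c e) - scaleC c e"
        unfolding p_def c_def w_def by (simp add: clinear_scale[OF lq] clinear_minus[OF lq] scaleC_diff_right scaleC_minus_left)
      moreover have "scaleC c e \<in> orthogonal_complement F" using eF cs by (rule csubspace_scale[rotated])
      ultimately show ?thesis by blast
    qed
    hence "is_pi F q p" unfolding is_pi_def using up pfix by auto
    thus ?thesis by blast
  qed
qed


lemma exist_ind:
  assumes "finite S"
  shows "\<And>F q. csubspace F \<Longrightarrow> orthonormal S \<Longrightarrow> S \<subseteq> orthogonal_complement F \<Longrightarrow> unitary q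
    \<Longrightarrow> (\<forall>x\<in>orthogonal_complement (F \<union> S). q x = x) \<Longrightarrow> \<exists>p. is_pi F q p"
  using assms
proof (induction S rule: finite_induct)
  case empty
  thus ?case using is_pi_self by fastforce
next
  case (insert e S)
  define F1 where "F1 = {f + scaleC c e | f c. f \<in> F}"
  have cF1: "csubspace F1" unfolding csubspace_def
  proof (intro conjI ballI allI)
    show "0 \<in> F1" unfolding F1_def using csubspace_0[OF insert.prems(1)]
      by (intro CollectI exI[of _ 0] exI[of _ "0::complex"]) simp
  next
    fix x y assume "x \<in> F1" "y \<in> F1"
    then obtain f1 c1 f2 c2 where "x = f1 + scaleC c1 e" "f1 \<in> F" "y = f2 + scaleC c2 e" "f2 \<in> F"
      unfolding F1_def by blast
    moreover have "x + y = (f1 + f2) + scaleC (c1 + c2) e" using calculation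
      by (simp add: scaleC_add_left algebra_simps)
    ultimately show "x + y \<in> F1" unfolding F1_def using csubspace_add[OF insert.prems(1)] by blast
  next
    fix c x assume "x \<in> F1"
    then obtain f1 c1 where "x = f1 + scaleC c1 e" "f1 \<in> F" unfolding F1_def by blast
    moreover have "scaleC c x = scaleC c f1 + scaleC (c * c1) e" using calculation
      by (simp add: scaleC_add_right scaleC_scaleC)
    ultimately show "scaleC c x \<in> F1" unfolding F1_def using csubspace_scale[OF insert.prems(1)] by blast
  qed
  have onS: "orthonormal S" using insert.prems(2) unfolding orthonormal_def by auto
  have eS: "cinner e s = 0" if "s \<in> S" for s
    using insert.prems(2) insert.hyps(2) that unfolding orthonormal_def by auto
  have e1: "cinner e e = 1" using insert.prems(2) unfolding orthonormal_def by auto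
  have SF1: "S \<subseteq> orthogonal_complement F1"
  proof
    fix s assume s: "s \<in> S"
    have "cinner y s = 0" if "y \<in> F1" for y
    proof -
      obtain f c where "y = f + scaleC c e" "f \<in> F" using \<open>y \<in> F1\<close> unfolding F1_def by blast
      moreover have "cinner f s = 0" using calculation(2) s insert.prems(3)
        unfolding orthogonal_complement_def by auto
      ultimately show ?thesis using eS[OF s] by (simp add: cinner_add_left cinner_scaleC_left)
    qed
    thus "s \<in> orthogonal_complement F1" unfolding orthogonal_complement_def by auto
  qed
  have FF1: "F \<subseteq> F1" unfolding F1_def by (auto intro!: exI[of _ "0::complex"])
  have eF1: "e \<in> F1" unfolding F1_def using csubspace_0[OF insert.prems(1)]
    by (intro CollectI exI[of _ 0] exI[of _ "1::complex"]) (simp add: scaleC_one)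
  have "orthogonal_complement (F1 \<union> S) \<subseteq> orthogonal_complement (F \<union> insert e S)"
    by (rule orth_anti) (use FF1 eF1 in auto)
  hence "\<forall>x\<in>orthogonal_complement (F1 \<union> S). q x = x" using insert.prems(5) by blast
  then obtain p1 where p1: "is_pi F1 q p1" using insert.IH[OF cF1 onS SF1 insert.prems(4)] by blast
  have up1: "unitary p1" using p1 unfolding is_pi_def by blast
  have eF: "e \<in> orthogonal_complement F" using insert.prems(3) by auto
  have fx: "p1 x = x" if "x \<in> orthogonal_complement F" "cinner e x = 0" for x
  proof -
    have "cinner y x = 0" if "y \<in> F1" for y
    proof -
      obtain f c where "y = f + scaleC c e" "f \<in> F" using \<open>y \<in> F1\<close> unfolding F1_def by blast
      moreover have "cinner f x = 0" using calculation(2) \<open>x \<in> orthogonal_complement F\<close>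
        unfolding orthogonal_complement_def by auto
      ultimately show ?thesis using \<open>cinner e x = 0\<close> by (simp add: cinner_add_left cinner_scaleC_left)
    qed
    hence "x \<in> orthogonal_complement F1" unfolding orthogonal_complement_def by auto
    thus ?thesis using p1 unfolding is_pi_def by blast
  qed
  obtain p2 where "is_pi F p1 p2" using one_step[OF up1 eF e1 fx] by blast
  thus ?case using is_pi_trans[OF FF1 insert.prems(4) p1] by blast
qed

lemma exist:
  assumes E: "finite_dim_csubspace E" and F: "csubspace F" "F \<subseteq> E"
    and u: "unitary u" "\<forall>x\<in>orthogonal_complement E. u x = x"
  shows "\<exists>p. is_pi F u p"
proof -
  obtain B where B: "finite B" "E = cspan B" using E unfolding finite_dim_csubspace_def by blast
  obtain T where T: "finite T" "T \<subseteq> F" "F = cspan T"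
    using subspace_finite_span[OF B(1) F(1)] F(2) B(2) by blast
  obtain SF where SF: "finite SF" "orthonormal SF" "SF \<subseteq> cspan T" "T \<subseteq> cspan SF"
    using gram_schmidt[OF T(1)] by blast
  have FSF: "cspan SF \<subseteq> F" using cspan_minimal[OF F(1)] SF(3) T(3) by blast
  define B' where "B' = (\<lambda>b. b - proj SF b) ` B"
  obtain S where S: "finite S" "orthonormal S" "S \<subseteq> cspan B'" "B' \<subseteq> cspan S"
    using gram_schmidt[of B'] B(1) unfolding B'_def by blast
  have SorthF: "S \<subseteq> orthogonal_complement F"
  proof
    fix s assume s: "s \<in> S"
    have "cinner t s = 0" if "t \<in> SF" for t
      by (rule cspan_orth_right[of B']) (use s S(3) proj_orth[OF SF(1,2) that] in \<open>auto simp: B'_def\<close>)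
    hence "cinner f s = 0" if "f \<in> F" for f
      using cspan_orth_left[of SF s f] that T(3) SF(4) cspan_minimal[OF csubspace_cspan SF(4)] by blast
    thus "s \<in> orthogonal_complement F" unfolding orthogonal_complement_def by auto
  qed
  have "\<forall>x\<in>orthogonal_complement (F \<union> S). u x = x"
  proof
    fix x assume x: "x \<in> orthogonal_complement (F \<union> S)"
    have "cinner b x = 0" if "b \<in> B" for b
    proof -
      have "cinner (proj SF b) x = 0" using x proj_in[of SF b] FSF unfolding orthogonal_complement_def by auto
      moreover have "cinner (b - proj SF b) x = 0"
        by (rule cspan_orth_left[of S]) (use x S(4) that in \<open>auto simp: orthogonal_complement_def B'_def\<close>)
      ultimately show ?thesis by (simp add: cinner_diff_left)
    qed
    hence "x \<in> orthogonal_complement E" unfolding orthogonal_complement_def B(2)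
      using cspan_orth_left[of B x] by blast
    thus "u x = x" using u(2) by blast
  qed
  thus ?thesis using exist_ind[OF S(1) F(1) S(2) SorthF u(1)] by blast
qed

theorem proposition2p1:
  fixes E F :: "'a::chilbert_space set" and u :: "'a \<Rightarrow> 'a"
  assumes "finite_dim_csubspace E" and "csubspace F" and "F \<subseteq> E"
    and "unitary u" and "\<forall>x\<in>orthogonal_complement E. u x = x"
  shows "(\<exists>!p. unitary p \<and> (\<forall>x\<in>orthogonal_complement F. p x = x)
              \<and> range (\<lambda>x. u x - p x) \<subseteq> (\<lambda>x. u x - x) ` orthogonal_complement F)
    \<and> (\<forall>G. csubspace G \<and> G \<subseteq> F \<longrightarrow>
          unitary (pi_op E F u)
          \<and> (\<forall>x\<in>orthogonal_complement F. pi_op E F u x = x)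
          \<and> pi_op F G (pi_op E F u) = pi_op E G u)"
proof -
  have ex1: "\<exists>!p. is_pi F u p"
    using exist[OF assms] is_pi_unique[OF assms(4)] by blast
  have p': "is_pi F u (pi_op E F u)" unfolding pi_op_def by (rule theI'[OF ex1])
  have up': "unitary (pi_op E F u)" using p' unfolding is_pi_def by blast
  have fp': "\<forall>x\<in>orthogonal_complement F. pi_op E F u x = x" using p' unfolding is_pi_def by blast
  have part2: "pi_op F G (pi_op E F u) = pi_op E G u" if G: "csubspace G" "G \<subseteq> F" for G
  proof -
    have "\<forall>x\<in>orthogonal_complement E. pi_op E F u x = x"
      using fp' orth_anti[OF assms(3)] by blast
    hence "\<exists>q. is_pi G (pi_op E F u) q"
      using exist[OF assms(1) G(1) _ up'] G(2) assms(3) by blast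
    hence ex2: "\<exists>!q. is_pi G (pi_op E F u) q" using is_pi_unique[OF up'] by blast
    have q: "is_pi G (pi_op E F u) (pi_op F G (pi_op E F u))" unfolding pi_op_def[of F G]
      by (rule theI'[OF ex2])
    have qu: "is_pi G u (pi_op F G (pi_op E F u))" by (rule is_pi_trans[OF G(2) assms(4) p' q])
    have ex3: "\<exists>!r. is_pi G u r" using qu is_pi_unique[OF assms(4)] by blast
    have "is_pi G u (THE r. is_pi G u r)" by (rule theI'[OF ex3])
    hence "(THE r. is_pi G u r) = pi_op F G (pi_op E F u)" by (rule is_pi_unique[OF assms(4) _ qu])
    thus ?thesis unfolding pi_op_def[of E G] by simp
  qed
  show ?thesis using ex1 up' fp' part2 unfolding is_pi_def by blast
qed

end
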